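(* Let $A\in\mathbb{R}^{m\times n}$, $\mathbf b\in\mathbb{R}^m$, and $f(\mathbf x)=\frac12\|A\mathbf x-\mathbf b\|^2$. Suppose the restricted isometry constant satisfies $0<\delta_{2s}<1$, and set $m_{2s}=1-\delta_{2s}$, $M_{2s}=1+\delta_{2s}$, $\mu_{2s}=M_{2s}/m_{2s}$. Run NHTP on $\min\{f(\mathbf x):\|\mathbf x\|_0\le s\}$ with parameters $$\beta=\tfrac14,\quad \sigma=\frac{1-w}{2-w/\mu_{2s}},\quad \gamma=m_{2s},\quad 0<\eta\le\frac{w}{8\mu_{2s}^2},\qquad\text{for some }0<w<1.$$ Then NHTP is well defined, and at every iteration the Newton direction $\mathbf d^k_N$ is accepted as the search direction ($\mathbf d^k=\mathbf d^k_N$). Moreover, if NHTP generates an infinite sequence $\{\mathbf x^k\}$ and $\mathbf x^*$ is an accumulation point of it, then: (i) the whole sequence converges to $\mathbf x^*$, which is an $\eta$-stationary point; (ii) $\mathbf d^k=\mathbf d^k_N$ for all sufficiently large $k$; (iii) for every $L\ge0$ (every such $L$ is a local restricted Hessian Lipschitz constant of $f$ at $\mathbf x^*$) there exists $k_0$ such that for all $k\ge k_0$: $\alpha_k=1$, $\|\mathbf x^{k+1}-\mathbf x^*\|\le\frac{L}{2m_{2s}}\|\mathbf x^k-\mathbf x^*\|^2$, and, for all sufficiently large $k$, $\|F_\eta(\mathbf x^{k+1};T_{k+1})\|\le\frac{L\sqrt{M_{2s}^2+1}}{\min\{m_{2s}^3,m_{2s}\}}\|F_\eta(\mathbf x^k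;T_k)\|^2$.
   Context: The restricted isometry constant $\delta_t$ of $A$ is the smallest $\delta\ge0$ such that $(1-\delta)\|\mathbf x\|^2\le\|A\mathbf x\|^2\le(1+\delta)\|\mathbf x\|^2$ for all $\mathbf x$ with $\|\mathbf x\|_0\le t$ ($\|\cdot\|_0$ = number of nonzeros). Notation: $\mathrm{supp}(\mathbf x)$ = indices of nonzeros; for $T\subseteq\{1,\dots,n\}$, $T^c$ its complement, $\mathbf x_T$ subvector, $\nabla_T f=(\nabla f)_T$, $\nabla^2_{T,J}f$ Hessian submatrix (rows $T$, columns $J$), $\nabla^2_T f=\nabla^2_{T,T}f$; $x_{(s)}$ is the $s$-th largest absolute value of the entries of $\mathbf x$. $\mathcal{P}_s(\mathbf x)=\mathrm{argmin}_{\mathbf z}\{\|\mathbf x-\mathbf z\|:\|\mathbf z\|_0\le s\}$; an $s$-sparse $\mathbf x^*$ is an $\eta$-stationary point if $\mathbf x^*\in\mathcal{P}_s(\mathbf x^*-\eta\nabla f(\mathbf x^* ))$. $\mathcal{T}(\mathbf x;\eta)=\{T:|T|=s,\ T\supseteq\mathrm{supp}(\mathbf z)\text{ for some }\mathbf z\in\mathcal{P}_s(\mathbf x-\eta\nabla f(\mathbf x))\}$; $F_\eta(\mathbf x;T)=(\nabla_T f(\mathbf x);\mathbf x_{T^c})$; $\mathrm{Tol}_\eta(\mathbf x;T)=\|F_\eta(\mathbf x;T)\|+\max_{i\in T^c}\max\{|\nabla_i f(\mathbf x)|-x_{(s)}/\eta,0\}$. Algorithm NHTP (parameters $\eta,\gamma>0$,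 $\sigma\in(0,1/2)$, $\beta\in(0,1)$; initial point $\mathbf x^0$ which is $s$-sparse, and $T_{-1}$ a fixed index set with $|T_{-1}|=s$ and $\mathrm{supp}(\mathbf x^0)\subseteq T_{-1}$). At iteration $k$: choose $T_k\in\mathcal{T}(\mathbf x^k;\eta)$; if $\mathrm{Tol}_\eta(\mathbf x^k;T_k)=0$ stop. Otherwise compute $\mathbf d^k$: the Newton direction $\mathbf d^k_N$ solves $\nabla^2_{T_k}f(\mathbf x^k)(\mathbf d^k_N)_{T_k}=\nabla^2_{T_k,T_k^c}f(\mathbf x^k)\mathbf x^k_{T_k^c}-\nabla_{T_k}f(\mathbf x^k)$, $(\mathbf d^k_N)_{T_k^c}=-\mathbf x^k_{T_k^c}$; set $\mathbf d^k=\mathbf d^k_N$ if $\langle\nabla_{T_k}f(\mathbf x^k),(\mathbf d^k_N)_{T_k}\rangle\le-\gamma\|\mathbf d^k_N\|^2+\frac1{4\eta}\|\mathbf x^k_{T_k^c}\|^2$; otherwise $\mathbf d^k=\mathbf d^k_g$ with $(\mathbf d^k_g)_{T_k}=-\nabla_{T_k}f(\mathbf x^k)$, $(\mathbf d^k_g)_{T_k^c}=-\mathbf x^k_{T_k^c}$. For $\alpha>0$ let $\mathbf x^k(\alpha)$ have $(\mathbf x^k(\alpha))_{T_k}=\mathbf x^k_{T_k}+\alpha\mathbf d^k_{T_k}$ and $(\mathbf x^k(\alpha))_{T_k^c}=0$. Let $\ell\ge0$ be the smallest integer with $f(\mathbf x^k(\beta^\ell))\le f(\mathbf x^k)+\sigma\beta^\ell\langle\nabla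 f(\mathbf x^k),\mathbf d^k\rangle$; set $\alpha_k=\beta^\ell$, $\mathbf x^{k+1}=\mathbf x^k(\alpha_k)$. *)

theory Defs
  imports "HOL-Analysis.Analysis" "HOL-Library.Multiset"
begin

text \<open>Vectors in R^n are real^'n, matrices A in R^(m x n) are real^'n^'m.\<close>

definition l0 :: "real^'n \<Rightarrow> nat" where
  "l0 x = card {i. x$i \<noteq> 0}"

definition supp :: "real^'n \<Rightarrow> 'n set" where
  "supp x = {i. x$i \<noteq> 0}"

definition ric :: "real^'n^'m \<Rightarrow> nat \<Rightarrow> real" where
  "ric A t = Inf {d. 0 \<le> d \<and> (\<forall>x. l0 x \<le> t \<longrightarrow>
        (1 - d) * (norm x)^2 \<le> (norm (A *v x))^2 \<and> (norm (A *v x))^2 \<le> (1 + d) * (norm x)^2)}"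

definition lsq_f :: "real^'n^'m \<Rightarrow> real^'m \<Rightarrow> real^'n \<Rightarrow> real" where
  "lsq_f A b x = (1/2) * (norm (A *v x - b))^2"

definition lsq_grad :: "real^'n^'m \<Rightarrow> real^'m \<Rightarrow> real^'n \<Rightarrow> real^'n" where
  "lsq_grad A b x = transpose A *v (A *v x - b)"

definition lsq_hess :: "real^'n^'m \<Rightarrow> real^'n^'n" where
  "lsq_hess A = transpose A ** A"

definition proj_s :: "nat \<Rightarrow> real^'n \<Rightarrow> (real^'n) set" where
  "proj_s s y = {z. l0 z \<le> s \<and> (\<forall>z'. l0 z' \<le> s \<longrightarrow> norm (y - z) \<le> norm (y - z'))}"

definition eta_stationary :: "real^'n^'m \<Rightarrow> real^'m \<Rightarrow> nat \<Rightarrow> real \<Rightarrow> real^'n \<Rightarrow> bool" where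
  "eta_stationary A b s \<eta> x \<longleftrightarrow> l0 x \<le> s \<and> x \<in> proj_s s (x - \<eta> *\<^sub>R lsq_grad A b x)"

definition Tset :: "real^'n^'m \<Rightarrow> real^'m \<Rightarrow> nat \<Rightarrow> real \<Rightarrow> real^'n \<Rightarrow> ('n set) set" where
  "Tset A b s \<eta> x = {T. card T = s \<and> (\<exists>z\<in>proj_s s (x - \<eta> *\<^sub>R lsq_grad A b x). supp z \<subseteq> T)}"

text \<open>F_eta(x;T) = (grad_T f(x); x_{T^c}), represented (up to a permutation of
  coordinates, which does not change the norm) as the vector whose i-th entry is
  grad_i f(x) for i in T and x_i for i not in T.\<close>
definition Fvec :: "real^'n^'m \<Rightarrow> real^'m \<Rightarrow> real^'n \<Rightarrow> 'n set \<Rightarrow> real^'n" where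
  "Fvec A b x T = (\<chi> i. if i \<in> T then lsq_grad A b x $ i else x $ i)"

text \<open>x_(s): the s-th largest absolute value among the entries of x.\<close>
definition kth_abs :: "real^'n \<Rightarrow> nat \<Rightarrow> real" where
  "kth_abs x s = rev (sorted_list_of_multiset (image_mset (\<lambda>i. \<bar>x$i\<bar>) (mset_set UNIV))) ! (s - 1)"

text \<open>Tol_eta(x;T); the max over an empty complement is taken to be 0.\<close>
definition Tol :: "real^'n^'m \<Rightarrow> real^'m \<Rightarrow> nat \<Rightarrow> real \<Rightarrow> real^'n \<Rightarrow> 'n set \<Rightarrow> real" where
  "Tol A b s \<eta> x T = norm (Fvec A b x T) +
     Max (insert 0 ((\<lambda>i. max (\<bar>lsq_grad A b x $ i\<bar> - kth_abs x s / \<eta>) 0) ` (- T)))"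

definition newton_dir :: "real^'n^'m \<Rightarrow> real^'m \<Rightarrow> real^'n \<Rightarrow> 'n set \<Rightarrow> real^'n \<Rightarrow> bool" where
  "newton_dir A b x T d \<longleftrightarrow>
     (\<forall>i\<in>T. (\<Sum>j\<in>T. lsq_hess A $ i $ j * d $ j) =
             (\<Sum>j\<in>-T. lsq_hess A $ i $ j * x $ j) - lsq_grad A b x $ i) \<and>
     (\<forall>i\<in>-T. d $ i = - x $ i)"

definition newton_accept :: "real^'n^'m \<Rightarrow> real^'m \<Rightarrow> real \<Rightarrow> real \<Rightarrow> real^'n \<Rightarrow> 'n set \<Rightarrow> real^'n \<Rightarrow> bool" where
  "newton_accept A b \<gamma> \<eta> x T d \<longleftrightarrow>
     (\<Sum>i\<in>T. lsq_grad A b x $ i * d $ i) \<le> - \<gamma> * (norm d)^2 + 1 / (4 * \<eta>) * (\<Sum>i\<in>-T. (x $ i)^2)"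

definition grad_dir :: "real^'n^'m \<Rightarrow> real^'m \<Rightarrow> real^'n \<Rightarrow> 'n set \<Rightarrow> real^'n" where
  "grad_dir A b x T = (\<chi> i. if i \<in> T then - lsq_grad A b x $ i else - x $ i)"

definition nhtp_dir :: "real^'n^'m \<Rightarrow> real^'m \<Rightarrow> real \<Rightarrow> real \<Rightarrow> real^'n \<Rightarrow> 'n set \<Rightarrow> real^'n \<Rightarrow> bool" where
  "nhtp_dir A b \<gamma> \<eta> x T d \<longleftrightarrow>
     (newton_dir A b x T d \<and> newton_accept A b \<gamma> \<eta> x T d) \<or>
     ((\<nexists>dN. newton_dir A b x T dN \<and> newton_accept A b \<gamma> \<eta> x T dN) \<and> d = grad_dir A b x T)"

definition step_pt :: "real^'n \<Rightarrow> 'n set \<Rightarrow> real^'n \<Rightarrow> real \<Rightarrow> real^'n" where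
  "step_pt x T d \<alpha> = (\<chi> i. if i \<in> T then x $ i + \<alpha> * d $ i else 0)"

definition armijo :: "real^'n^'m \<Rightarrow> real^'m \<Rightarrow> real \<Rightarrow> real^'n \<Rightarrow> 'n set \<Rightarrow> real^'n \<Rightarrow> real \<Rightarrow> bool" where
  "armijo A b \<sigma> x T d \<alpha> \<longleftrightarrow>
     lsq_f A b (step_pt x T d \<alpha>) \<le> lsq_f A b x + \<sigma> * \<alpha> * (lsq_grad A b x \<bullet> d)"

definition nhtp_iter :: "real^'n^'m \<Rightarrow> real^'m \<Rightarrow> nat \<Rightarrow> real \<Rightarrow> real \<Rightarrow> real \<Rightarrow> real \<Rightarrow>
    real^'n \<Rightarrow> 'n set \<Rightarrow> real^'n \<Rightarrow> real \<Rightarrow> real^'n \<Rightarrow> bool" where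
  "nhtp_iter A b s \<eta> \<gamma> \<sigma> \<beta> x T d \<alpha> x' \<longleftrightarrow>
     T \<in> Tset A b s \<eta> x \<and> Tol A b s \<eta> x T \<noteq> 0 \<and>
     nhtp_dir A b \<gamma> \<eta> x T d \<and>
     (\<exists>l::nat. armijo A b \<sigma> x T d (\<beta> ^ l)) \<and>
     \<alpha> = \<beta> ^ (LEAST l::nat. armijo A b \<sigma> x T d (\<beta> ^ l)) \<and>
     x' = step_pt x T d \<alpha>"

inductive nhtp_reach :: "real^'n^'m \<Rightarrow> real^'m \<Rightarrow> nat \<Rightarrow> real \<Rightarrow> real \<Rightarrow> real \<Rightarrow> real \<Rightarrow>
    real^'n \<Rightarrow> real^'n \<Rightarrow> bool"
  for A b s \<eta> \<gamma> \<sigma> \<beta> x0 where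
  start: "nhtp_reach A b s \<eta> \<gamma> \<sigma> \<beta> x0 x0"
| step: "nhtp_reach A b s \<eta> \<gamma> \<sigma> \<beta> x0 x \<Longrightarrow> nhtp_iter A b s \<eta> \<gamma> \<sigma> \<beta> x T d \<alpha> x' \<Longrightarrow>
         nhtp_reach A b s \<eta> \<gamma> \<sigma> \<beta> x0 x'"

end

theory Submission
  imports Defs
begin

definition rs :: "'n set \<Rightarrow> real^'n \<Rightarrow> real^'n" where
  "rs T w = (\<chi> k. if k \<in> T then w$k else 0)"

lemma rs_nth[simp]: "rs T w $ k = (if k \<in> T then w$k else 0)"
  by (simp add: rs_def)

lemma inner_rs: "u \<bullet> rs T w = (\<Sum>k\<in>UNIV. if k\<in>T then u$k * w$k else 0)"
  by (auto simp: inner_vec_def intro!: sum.cong)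

lemma norm2_vec: "(norm (w::real^'n))^2 = (\<Sum>k\<in>UNIV. (w$k)^2)"
  unfolding power2_norm_eq_inner inner_vec_def by (simp add: power2_eq_square)

lemma norm2_rs: "(norm (rs T w))^2 = (\<Sum>k\<in>UNIV. if k\<in>T then (w$k)^2 else 0)"
  by (auto simp: norm2_vec intro!: sum.cong)

lemma dot_transpose:
  fixes A :: "real^'n^'m"
  shows "x \<bullet> (transpose A *v y) = (A *v x) \<bullet> y"
proof -
  have "x \<bullet> (transpose A *v y) = (\<Sum>i\<in>UNIV. \<Sum>j\<in>UNIV. x$i * (A$j$i * y$j))"
    by (simp add: inner_vec_def matrix_vector_mult_def transpose_def sum_distrib_left)
  also have "\<dots> = (\<Sum>j\<in>UNIV. \<Sum>i\<in>UNIV. x$i * (A$j$i * y$j))" by (rule sum.swap)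
  also have "\<dots> = (\<Sum>j\<in>UNIV. (\<Sum>i\<in>UNIV. A$j$i * x$i) * y$j)"
    by (simp add: sum_distrib_right sum_distrib_left mult_ac)
  also have "\<dots> = (A *v x) \<bullet> y"
    by (simp add: inner_vec_def matrix_vector_mult_def)
  finally show ?thesis .
qed

lemma hess_mv: "lsq_hess A *v e = transpose A *v (A *v e)"
  by (simp add: lsq_hess_def matrix_vector_mul_assoc)

lemma hess_dot: "e \<bullet> (lsq_hess A *v d) = (A *v e) \<bullet> (A *v d)"
proof -
  have "e \<bullet> (lsq_hess A *v d) = e \<bullet> (transpose A *v (A *v d))" by (simp only: hess_mv)
  also have "\<dots> = (A *v e) \<bullet> (A *v d)" by (rule dot_transpose)
  finally show ?thesis .
qed

lemma grad_add: "lsq_grad A b (x + d) = lsq_grad A b x + lsq_hess A *v d"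
  by (simp add: lsq_grad_def hess_mv matrix_vector_right_distrib algebra_simps)

lemma grad_diff: "lsq_grad A b z - lsq_grad A b x = lsq_hess A *v (z - x)"
  using grad_add[of A b x "z - x"] by simp

lemma f_add: "lsq_f A b (x + d) = lsq_f A b x + lsq_grad A b x \<bullet> d + (norm (A *v d))^2 / 2"
proof -
  have e: "A *v (x + d) - b = (A *v x - b) + A *v d" by (simp add: matrix_vector_right_distrib)
  have "lsq_grad A b x \<bullet> d = d \<bullet> (transpose A *v (A *v x - b))"
    by (simp only: lsq_grad_def inner_commute)
  also have "\<dots> = (A *v d) \<bullet> (A *v x - b)" by (rule dot_transpose)
  finally have g: "lsq_grad A b x \<bullet> d = (A *v x - b) \<bullet> (A *v d)" by (simp add: inner_commute)
  show ?thesis unfolding lsq_f_def e g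
    by (simp add: power2_norm_eq_inner inner_add inner_commute algebra_simps)
qed

lemma l0_le: "l0 x \<le> k" if "{i. x$i \<noteq> 0} \<subseteq> S" "card S \<le> k"
proof -
  have "card {i. x$i \<noteq> 0} \<le> card S" by (rule card_mono) (auto simp: that)
  thus ?thesis unfolding l0_def using that by linarith
qed

lemma ric_rip:
  fixes A :: "real^'n^'m"
  assumes "l0 x \<le> t"
  shows "(1 - ric A t) * (norm x)^2 \<le> (norm (A *v x))^2 \<and> (norm (A *v x))^2 \<le> (1 + ric A t) * (norm x)^2"
proof -
  define D where "D = {d. 0 \<le> d \<and> (\<forall>x. l0 x \<le> t \<longrightarrow>
        (1 - d) * (norm x)^2 \<le> (norm (A *v x))^2 \<and> (norm (A *v x))^2 \<le> (1 + d) * (norm x)^2)}"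
  have ric: "ric A t = Inf D" by (simp add: ric_def D_def)
  obtain K where K: "K > 0" "\<And>x. norm (A *v x) \<le> norm x * K"
    using bounded_linear.pos_bounded[OF matrix_vector_mul_bounded_linear[of A]] by blast
  have "K^2 + 1 \<in> D"
  proof -
    { fix x :: "real^'n"
      have "(norm (A *v x))^2 \<le> (norm x * K)^2" using K(2)[of x] by (simp add: power_mono)
      also have "\<dots> \<le> (1 + (K^2+1)) * (norm x)^2" by (simp add: power_mult_distrib algebra_simps)
      finally have "(norm (A *v x))^2 \<le> (1 + (K^2+1)) * (norm x)^2" .
      moreover have "(1 - (K^2+1)) * (norm x)^2 \<le> (norm (A *v x))^2"
      proof -
        have "(1 - (K^2+1)) * (norm x)^2 \<le> 0" by (rule mult_nonpos_nonneg) auto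
        thus ?thesis by (meson order_trans zero_le_power2)
      qed
      ultimately have "(1 - (K^2+1)) * (norm x)^2 \<le> (norm (A *v x))^2 \<and> (norm (A *v x))^2 \<le> (1 + (K^2+1)) * (norm x)^2" by simp }
    then show ?thesis by (simp add: D_def)
  qed
  hence ne: "D \<noteq> {}" by blast
  show ?thesis
  proof (cases "x = 0")
    case True then show ?thesis by simp
  next
    case False
    hence nx: "(norm x)^2 > 0" by simp
    have up: "(norm (A *v x))^2 / (norm x)^2 - 1 \<le> ric A t"
      unfolding ric
    proof (rule cInf_greatest[OF ne])
      fix d assume "d \<in> D"
      hence "(norm (A *v x))^2 \<le> (1 + d) * (norm x)^2" using assms by (auto simp: D_def)
      thus "(norm (A *v x))^2 / (norm x)^2 - 1 \<le> d" using nx by (simp add: field_simps)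
    qed
    have lo: "1 - (norm (A *v x))^2 / (norm x)^2 \<le> ric A t"
      unfolding ric
    proof (rule cInf_greatest[OF ne])
      fix d assume "d \<in> D"
      hence "(1 - d) * (norm x)^2 \<le> (norm (A *v x))^2" using assms by (auto simp: D_def)
      thus "1 - (norm (A *v x))^2 / (norm x)^2 \<le> d" using nx by (simp add: field_simps)
    qed
    have u1: "(norm (A *v x))^2 / (norm x)^2 \<le> 1 + ric A t" using up by linarith
    have l1: "1 - ric A t \<le> (norm (A *v x))^2 / (norm x)^2" using lo by linarith
    show ?thesis using u1 l1 by (simp add: pos_divide_le_eq[OF nx] pos_le_divide_eq[OF nx])
  qed
qed

lemma ric_zero: "ric (A::real^'n^'m) 0 = 0"
proof -
  have h: "\<And>x::real^'n. l0 x = 0 \<Longrightarrow> x = 0"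
    by (auto simp: l0_def vec_eq_iff)
  hence "{d. 0 \<le> d \<and> (\<forall>x::real^'n. l0 x \<le> 0 \<longrightarrow>
        (1 - d) * (norm x)^2 \<le> (norm (A *v x))^2 \<and> (norm (A *v x))^2 \<le> (1 + d) * (norm x)^2)} = {0..}"
    by (auto dest: h)
  thus ?thesis by (simp add: ric_def)
qed

lemma sum_if_T: "(\<Sum>k\<in>UNIV. if k\<in>T then f k else 0) = sum f (T::'n::finite set)"
  by (simp add: sum.If_cases)

lemma sum_if_nT: "(\<Sum>k\<in>UNIV. if k\<in>T then 0 else f k) = sum f (- (T::'n::finite set))"
  by (simp add: sum.If_cases Compl_eq)

lemma sum_split: "sum f UNIV = sum f T + sum f (- (T::'n::finite set))"
proof -
  have "sum f (T \<union> -T) = sum f T + sum f (-T)" by (rule sum.union_disjoint) auto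
  thus ?thesis by simp
qed

lemma nd_iff: "newton_dir A b x T d \<longleftrightarrow>
   (\<forall>i\<in>T. (lsq_hess A *v d)$i = - lsq_grad A b x $ i) \<and> (\<forall>i\<in>-T. d$i = - x$i)"
proof -
  let ?H = "lsq_hess A"
  have sp: "(?H *v d)$i = (\<Sum>j\<in>T. ?H$i$j * d$j) + (\<Sum>j\<in>-T. ?H$i$j * d$j)" for i
    by (simp add: matrix_vector_mult_def sum_split[of _ T])
  have sc: "(\<Sum>j\<in>-T. ?H$i$j * d$j) = - (\<Sum>j\<in>-T. ?H$i$j * x$j)"
    if c: "\<forall>i\<in>-T. d$i = - x$i" for i
  proof -
    have "(\<Sum>j\<in>-T. ?H$i$j * d$j) = (\<Sum>j\<in>-T. - (?H$i$j * x$j))"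
      by (rule sum.cong) (use c in auto)
    thus ?thesis by (simp add: sum_negf)
  qed
  show ?thesis
  proof
    assume nd: "newton_dir A b x T d"
    hence c: "\<forall>i\<in>-T. d$i = - x$i" by (simp add: newton_dir_def)
    have "(?H *v d)$i = - lsq_grad A b x $ i" if "i \<in> T" for i
      using nd that sp[of i] sc[OF c, of i] unfolding newton_dir_def by simp
    thus "(\<forall>i\<in>T. (?H *v d)$i = - lsq_grad A b x $ i) \<and> (\<forall>i\<in>-T. d$i = - x$i)"
      using c by blast
  next
    assume h: "(\<forall>i\<in>T. (?H *v d)$i = - lsq_grad A b x $ i) \<and> (\<forall>i\<in>-T. d$i = - x$i)"
    have "(\<Sum>j\<in>T. ?H$i$j * d$j) = (\<Sum>j\<in>-T. ?H$i$j * x$j) - lsq_grad A b x $ i"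
      if "i \<in> T" for i
      using h that sp[of i] sc[of i] by simp
    thus "newton_dir A b x T d" using h unfolding newton_dir_def by blast
  qed
qed

lemma proj_le:
  assumes z: "z \<in> proj_s s y" and zT: "supp z \<subseteq> T" and K: "card K \<le> s"
  shows "(\<Sum>k\<in>UNIV. if k\<in>T then 0 else (y$k)^2) \<le> (\<Sum>k\<in>UNIV. if k\<in>K then 0 else (y$k)^2)"
proof -
  have l: "l0 (rs K y) \<le> s" by (rule l0_le[OF _ K]) auto
  hence "norm (y - z) \<le> norm (y - rs K y)" using z by (simp add: proj_s_def)
  hence "(norm (y - z))^2 \<le> (norm (y - rs K y))^2" by (simp add: power_mono)
  moreover have "(\<Sum>k\<in>UNIV. if k\<in>T then 0 else (y$k)^2) \<le> (norm (y - z))^2"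
    unfolding norm2_vec
  proof (rule sum_mono)
    fix k :: 'a
    show "(if k\<in>T then 0 else (y$k)^2) \<le> ((y - z)$k)^2"
    proof (cases "k \<in> T")
      case False
      hence "z$k = 0" using zT unfolding supp_def by blast
      thus ?thesis using False by simp
    qed simp
  qed
  moreover have "(norm (y - rs K y))^2 = (\<Sum>k\<in>UNIV. if k\<in>K then 0 else (y$k)^2)"
    unfolding norm2_vec by (rule sum.cong) auto
  ultimately show ?thesis by linarith
qed

lemma norm_add_sq: "(norm (r + t *\<^sub>R v))^2 = (norm r)^2 + 2*t*(r \<bullet> v) + t^2*(norm v)^2"
  for r v :: "'a::real_inner"
  unfolding power2_norm_eq_inner
  by (simp add: inner_add_left inner_add_right inner_commute power2_eq_square algebra_simps)

lemma closed_coord0: "closed {z::real^'n. z$i = 0}"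
proof -
  have "{z::real^'n. z$i = 0} = {z. axis i 1 \<bullet> z = 0}" by (simp add: inner_axis')
  thus ?thesis by (simp add: closed_hyperplane)
qed

lemma proj_nonempty: "proj_s s (y::real^'n) \<noteq> {}"
proof -
  let ?S = "{z::real^'n. l0 z \<le> s}"
  have eq: "?S = (\<Union>K\<in>{K. card K \<le> s}. (\<Inter>i\<in>-K. {z::real^'n. z$i = 0}))"
  proof (intro set_eqI iffI)
    fix z assume "z \<in> ?S"
    thus "z \<in> (\<Union>K\<in>{K. card K \<le> s}. (\<Inter>i\<in>-K. {z::real^'n. z$i = 0}))"
      by (intro UN_I[of "{i. z$i \<noteq> 0}"]) (auto simp: l0_def)
  next
    fix z assume "z \<in> (\<Union>K\<in>{K. card K \<le> s}. (\<Inter>i\<in>-K. {z::real^'n. z$i = 0}))"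
    then obtain K where "card K \<le> s" "\<forall>i\<in>-K. z$i = 0" by auto
    thus "z \<in> ?S" by (auto intro!: l0_le[of z K])
  qed
  have "closed ?S" unfolding eq
    by (intro closed_UN ballI closed_INT closed_coord0) auto
  moreover have "?S \<noteq> {}" using l0_le[of 0 "{}" s] by auto
  ultimately obtain z where "z \<in> ?S" "\<And>z'. z' \<in> ?S \<Longrightarrow> dist y z \<le> dist y z'"
    using distance_attains_inf by blast
  hence "z \<in> proj_s s y" by (auto simp: proj_s_def dist_norm)
  thus ?thesis by blast
qed

lemma Tset_nonempty:
  assumes "s \<le> CARD('n)"
  shows "Tset A b s \<eta> (x::real^'n) \<noteq> {}"
proof -
  obtain z where z: "z \<in> proj_s s (x - \<eta> *\<^sub>R lsq_grad A b x)" using proj_nonempty by blast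
  hence "card (supp z) \<le> s" by (simp add: proj_s_def l0_def supp_def)
  then obtain T where "supp z \<subseteq> T" "card T = s"
    using exists_subset_between[of "supp z" s UNIV] assms by auto
  thus ?thesis using z by (auto simp: Tset_def)
qed

lemma quad_zero:
  fixes a c :: real
  assumes "a \<ge> 0" "\<And>t. 0 \<le> 2*t*c + t^2*a"
  shows "c = 0"
proof -
  define t where "t = -c/(a+1)"
  have "0 \<le> 2*t*c + t^2*a" by (rule assms(2))
  hence h0: "0 \<le> (a+1)^2 * (2*t*c + t^2*a)" by simp
  have ta: "t*(a+1) = -c" using assms(1) by (simp add: t_def)
  have "(a+1)^2 * (2*t*c + t^2*a) = 2*c*(t*(a+1))*(a+1) + (t*(a+1))^2*a"
    by (simp add: power2_eq_square algebra_simps)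
  also have "\<dots> = - (c^2 * (a + 2))" unfolding ta by (simp add: power2_eq_square algebra_simps)
  finally have "(a+1)^2 * (2*t*c + t^2*a) = - (c^2 * (a + 2))" .
  with h0 have "c^2 * (a+2) \<le> 0" by simp
  hence "c^2 \<le> 0" using assms(1) by (simp add: mult_le_0_iff)
  thus ?thesis by simp
qed

lemma exists_opt:
  fixes A :: "real^'n^'m"
  shows "\<exists>z. (\<forall>i\<in>-T. z$i = 0) \<and> (\<forall>i\<in>T. lsq_grad A b z $ i = 0)"
proof -
  let ?V = "{z::real^'n. \<forall>i\<in>-T. z$i = 0}"
  have sV: "subspace ?V" by (auto simp: subspace_def)
  let ?W = "(\<lambda>z. A *v z) ` ?V"
  have "subspace ?W" by (rule linear_subspace_image[OF matrix_vector_mul_linear sV])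
  hence "closed ?W" by (rule closed_subspace)
  moreover have "(0::real^'n) \<in> ?V" by simp
  hence "?W \<noteq> {}" by blast
  ultimately obtain p where p: "p \<in> ?W" "\<And>q. q \<in> ?W \<Longrightarrow> dist b p \<le> dist b q"
    using distance_attains_inf by blast
  then obtain z where z: "z \<in> ?V" "p = A *v z" by blast
  have "lsq_grad A b z $ i = 0" if iT: "i \<in> T" for i
  proof -
    let ?e = "axis i (1::real) :: real^'n"
    let ?r = "A *v z - b"
    have "?e \<in> ?V" using iT by (auto simp: axis_def)
    have "0 \<le> 2*t*(?r \<bullet> (A *v ?e)) + t^2*((A *v ?e) \<bullet> (A *v ?e))" for t :: real
    proof -
      have "z + t *\<^sub>R ?e \<in> ?V" using z(1) \<open>?e \<in> ?V\<close> by auto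
      hence "A *v (z + t *\<^sub>R ?e) \<in> ?W" by blast
      hence "dist b p \<le> dist b (A *v (z + t *\<^sub>R ?e))" by (rule p(2))
      hence "norm ?r \<le> norm (?r + t *\<^sub>R (A *v ?e))"
        by (simp add: z(2) dist_norm norm_minus_commute matrix_vector_right_distrib
              matrix_vector_mult_scaleR algebra_simps)
      hence "(norm ?r)^2 \<le> (norm (?r + t *\<^sub>R (A *v ?e)))^2" by (simp add: power_mono)
      thus ?thesis unfolding norm_add_sq by (simp add: power2_norm_eq_inner)
    qed
    hence "?r \<bullet> (A *v ?e) = 0" by (intro quad_zero[of "(A *v ?e) \<bullet> (A *v ?e)"]) auto
    moreover have "lsq_grad A b z $ i = ?e \<bullet> lsq_grad A b z" by (simp add: inner_axis')
    moreover have "?e \<bullet> lsq_grad A b z = (A *v ?e) \<bullet> ?r"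
      unfolding lsq_grad_def by (rule dot_transpose)
    ultimately show ?thesis by (simp add: inner_commute)
  qed
  thus ?thesis using z(1) by blast
qed

lemma norm_diff_sq: "(norm (r - t *\<^sub>R v))^2 = (norm r)^2 - 2*t*(r \<bullet> v) + t^2*(norm v)^2"
  for r v :: "'a::real_inner"
  using norm_add_sq[of r "-t" v] by simp

definition ripc :: "real^'n^'m \<Rightarrow> nat \<Rightarrow> real \<Rightarrow> real \<Rightarrow> bool" where
  "ripc A s m M \<longleftrightarrow> (\<forall>w. l0 w \<le> 2 * s \<longrightarrow>
      m*(norm w)^2 \<le> (norm (A *v w))^2 \<and> (norm (A *v w))^2 \<le> M*(norm w)^2)"

lemma key:
  fixes A :: "real^'n^'m" and x d :: "real^'n"
  assumes RIP: "ripc A s m M"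
    and m: "0 < m" and M: "0 < M" "3*m + M \<le> 4"
    and x: "l0 x \<le> s" and T: "card T = s" and nd: "newton_dir A b x T d"
    and \<eta>: "0 < \<eta>" "\<eta> \<le> 1/4"
    and TT: "T \<in> Tset A b s \<eta> x"
  shows "newton_accept A b m \<eta> x T d \<and>
         lsq_grad A b x \<bullet> d \<le> - (1 - M*\<eta>) * (norm (A *v d))^2"
proof -
  have rip: "m*(norm w)^2 \<le> (norm (A *v w))^2 \<and> (norm (A *v w))^2 \<le> M*(norm w)^2"
    if "l0 w \<le> 2 * s" for w using RIP that unfolding ripc_def by blast
  let ?H = "lsq_hess A"
  let ?g = "lsq_grad A b x"
  have hT: "\<forall>i\<in>T. (?H *v d)$i = - ?g$i" and hc: "\<forall>i\<in>-T. d$i = - x$i"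
    using nd by (auto simp: nd_iff)
  define S where "S = {i. x$i \<noteq> 0}"
  have cS: "card S \<le> s" using x by (simp add: l0_def S_def)
  define v where "v = rs (-T) d"
  define u where "u = rs T d"
  have duv: "d = u + v" by (auto simp: vec_eq_iff u_def v_def)
  define a where "a = (norm (A *v d))^2"
  define p where "p = (A *v v) \<bullet> (A *v d)"
  define q where "q = (norm (A *v v))^2"
  define dd where "dd = (norm d)^2"
  define nv where "nv = (norm v)^2"
  have nv0: "0 \<le> nv" by (simp add: nv_def)
  have a0: "0 \<le> a" by (simp add: a_def)
  have lv: "l0 v \<le> 2 * s"
  proof (rule l0_le[of v S])
    show "{i. v$i \<noteq> 0} \<subseteq> S" using hc by (auto simp: v_def S_def)
  qed (use cS in simp)
  have q_le: "q \<le> M*nv" using rip[OF lv] by (simp add: q_def nv_def)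
  define e where "e = d - (1/2) *\<^sub>R v"
  have le: "l0 e \<le> 2 * s"
  proof (rule l0_le[of e "T \<union> S"])
    show "{i. e$i \<noteq> 0} \<subseteq> T \<union> S" using hc by (auto simp: e_def v_def S_def)
    have "card (T \<union> S) \<le> card T + card S" by (rule card_Un_le)
    thus "card (T \<union> S) \<le> 2 * s" using T cS by simp
  qed
  have e_ge: "m*(norm e)^2 \<le> (norm (A *v e))^2" using rip[OF le] by simp
  have Ae: "A *v e = A *v d - (1/2) *\<^sub>R (A *v v)"
    by (simp add: e_def matrix_vector_mult_diff_distrib matrix_vector_mult_scaleR)
  have nAe: "(norm (A *v e))^2 = a - p + q/4"
    unfolding Ae norm_diff_sq by (simp add: a_def p_def q_def inner_commute power2_eq_square)
  have uv0: "u \<bullet> v = 0" by (auto simp: inner_vec_def u_def v_def intro!: sum.neutral)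
  have dv: "d \<bullet> v = nv" unfolding duv by (simp add: inner_add_left uv0 nv_def power2_norm_eq_inner)
  have ne: "(norm e)^2 = dd - nv + nv/4"
    unfolding e_def norm_diff_sq by (simp add: dv dd_def nv_def power2_eq_square)
  have gu: "(\<Sum>i\<in>T. ?g$i * d$i) = -(a - p)"
  proof -
    have "(\<Sum>i\<in>T. ?g$i * d$i) = - (\<Sum>i\<in>T. (?H *v d)$i * d$i)"
      using hT by (simp add: sum_negf[symmetric])
    also have "(\<Sum>i\<in>T. (?H *v d)$i * d$i) = (?H *v d) \<bullet> u"
      by (simp add: u_def inner_rs sum_if_T)
    also have "\<dots> = u \<bullet> (?H *v d)" by (rule inner_commute)
    also have "\<dots> = (A *v u) \<bullet> (A *v d)" by (rule hess_dot)
    also have "A *v u = A *v d - A *v v" using duv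
      by (metis add_diff_cancel_right' matrix_vector_mult_diff_distrib)
    also have "(A *v d - A *v v) \<bullet> (A *v d) = a - p"
      by (simp add: inner_diff_left a_def p_def power2_norm_eq_inner)
    finally show ?thesis .
  qed
  have xnv: "(\<Sum>i\<in>-T. (x$i)^2) = nv"
  proof -
    have "nv = (\<Sum>i\<in>-T. (d$i)^2)" by (simp only: nv_def v_def norm2_rs sum_if_T)
    also have "\<dots> = (\<Sum>i\<in>-T. (x$i)^2)" by (rule sum.cong) (use hc in auto)
    finally show ?thesis by simp
  qed
  have F1: "m*dd - (3/4)*(m*nv) \<le> a - p + q/4"
  proof -
    have "m*(norm e)^2 = m*dd - (3/4)*(m*nv)" unfolding ne by (simp add: algebra_simps)
    thus ?thesis using e_ge nAe by simp
  qed
  have F2: "3*(m*nv) + M*nv \<le> 4*nv"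
  proof -
    have "(3*m + M)*nv \<le> 4*nv" using M(2) nv0 by (rule mult_right_mono)
    thus ?thesis by (simp add: algebra_simps)
  qed
  have "1 \<le> 1/(4*\<eta>)" using \<eta> by (simp add: field_simps)
  hence F4: "nv \<le> 1/(4*\<eta>)*nv" using nv0 by (metis mult_1 mult_right_mono)
  have acc: "newton_accept A b m \<eta> x T d"
    unfolding newton_accept_def gu xnv
    using F1 F2 F4 q_le by (simp add: dd_def[symmetric])
  obtain z where z: "z \<in> proj_s s (x - \<eta> *\<^sub>R ?g)" "supp z \<subseteq> T"
    using TT by (auto simp: Tset_def)
  define y where "y = x - \<eta> *\<^sub>R ?g"
  have PL: "(\<Sum>k\<in>UNIV. if k\<in>T then 0 else (y$k)^2) \<le> (\<Sum>k\<in>UNIV. if k\<in>S then 0 else (y$k)^2)"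
    using proj_le[OF z(1)[folded y_def] z(2) cS] .
  define X where "X = (\<Sum>k\<in>-T. ?g$k * x$k)"
  define G1 where "G1 = (\<Sum>k\<in>T. (?g$k)^2)"
  define G2 where "G2 = (\<Sum>k\<in>-T. (?g$k)^2)"
  have L: "(\<Sum>k\<in>UNIV. if k\<in>T then 0 else (y$k)^2) = nv - 2*\<eta>*X + \<eta>^2*G2"
  proof -
    have "(\<Sum>k\<in>UNIV. if k\<in>T then 0 else (y$k)^2) = (\<Sum>k\<in>-T. (y$k)^2)" by (rule sum_if_nT)
    also have "\<dots> = (\<Sum>k\<in>-T. (x$k)^2 - 2*\<eta>*(?g$k * x$k) + \<eta>^2*(?g$k)^2)"
      by (rule sum.cong) (auto simp: y_def power2_eq_square algebra_simps)
    also have "\<dots> = nv - 2*\<eta>*X + \<eta>^2*G2"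
      by (simp add: sum.distrib sum_subtractf sum_distrib_left[symmetric] xnv X_def G2_def)
    finally show ?thesis .
  qed
  have R: "(\<Sum>k\<in>UNIV. if k\<in>S then 0 else (y$k)^2) \<le> \<eta>^2*(G1 + G2)"
  proof -
    have "(\<Sum>k\<in>UNIV. if k\<in>S then 0 else (y$k)^2) \<le> (\<Sum>k\<in>UNIV. \<eta>^2*(?g$k)^2)"
      by (rule sum_mono) (auto simp: S_def y_def power2_eq_square)
    also have "\<dots> = \<eta>^2*(G1 + G2)"
      by (simp add: sum_distrib_left[symmetric] sum_split[of _ T] G1_def G2_def)
    finally show ?thesis .
  qed
  have P: "nv - 2*\<eta>*X \<le> \<eta>^2*G1" using PL L R by (simp add: algebra_simps)
  have gd: "?g \<bullet> d = -(a - p) - X"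
  proof -
    have "?g \<bullet> d = (\<Sum>k\<in>T. ?g$k * d$k) + (\<Sum>k\<in>-T. ?g$k * d$k)"
      by (simp add: inner_vec_def sum_split[of _ T])
    also have "(\<Sum>k\<in>-T. ?g$k * d$k) = - X"
      unfolding X_def by (simp add: sum_negf[symmetric]) (rule sum.cong, use hc in auto)
    finally show ?thesis using gu by simp
  qed
  define gT where "gT = rs T ?g"
  have ngT: "(norm gT)^2 = G1" by (simp add: gT_def norm2_rs sum_if_T G1_def)
  have cgT: "(A *v gT) \<bullet> (A *v d) = - G1"
  proof -
    have "(A *v gT) \<bullet> (A *v d) = gT \<bullet> (?H *v d)" by (rule hess_dot[symmetric])
    also have "\<dots> = (?H *v d) \<bullet> gT" by (rule inner_commute)
    also have "\<dots> = (\<Sum>k\<in>T. (?H *v d)$k * ?g$k)"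
      by (simp add: gT_def inner_rs sum_if_T)
    also have "\<dots> = (\<Sum>k\<in>T. - ((?g$k)^2))"
      by (rule sum.cong) (use hT in \<open>auto simp: power2_eq_square\<close>)
    finally show ?thesis by (simp add: sum_negf G1_def)
  qed
  have lgT: "l0 gT \<le> 2 * s"
    by (rule l0_le[of gT T]) (auto simp: gT_def T)
  have AgT: "(norm (A *v gT))^2 \<le> M*G1" using rip[OF lgT] ngT by simp
  have "0 \<le> (norm (A *v gT + M *\<^sub>R (A *v d)))^2" by simp
  also have "\<dots> = (norm (A *v gT))^2 + 2*M*((A *v gT) \<bullet> (A *v d)) + M^2*a"
    by (simp add: norm_add_sq a_def)
  finally have "0 \<le> (norm (A *v gT))^2 - 2*(M*G1) + M^2*a" by (simp add: cgT)
  hence "M*G1 \<le> M*(M*a)" using AgT by (simp add: power2_eq_square algebra_simps)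
  hence G1a: "G1 \<le> M*a" using M(1) by simp
  have "0 \<le> (norm (A *v v - (M*\<eta>) *\<^sub>R (A *v d)))^2" by simp
  also have "\<dots> = q - 2*(M*\<eta>)*p + (M*\<eta>)^2*a"
    by (simp only: norm_diff_sq a_def q_def p_def)
  finally have "M*(2*\<eta>*p) \<le> M*(nv + M*\<eta>^2*a)" using q_le
    by (simp add: power2_eq_square algebra_simps)
  hence F5: "2*\<eta>*p \<le> nv + M*\<eta>^2*a" using M(1) by simp
  have F6: "\<eta>^2*G1 \<le> \<eta>^2*(M*a)" using G1a by (simp add: mult_left_mono)
  have "2*\<eta>*(?g \<bullet> d) = -2*\<eta>*a + 2*\<eta>*p - 2*\<eta>*X" unfolding gd by (simp add: algebra_simps)
  also have "\<dots> \<le> -2*\<eta>*a + 2*(M*\<eta>^2*a)" using F5 F6 P by (simp add: algebra_simps)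
  also have "\<dots> = 2*\<eta>*(- (1 - M*\<eta>) * a)" by (simp add: power2_eq_square algebra_simps)
  finally have "?g \<bullet> d \<le> - (1 - M*\<eta>) * a" using \<eta>(1) by simp
  thus ?thesis using acc by (simp add: a_def)
qed

lemma uniq:
  fixes A :: "real^'n^'m"
  assumes RIP: "ripc A s m M" and m: "0 < m" and T: "card T = s"
    and off: "\<forall>i\<in>-T. e$i = 0" and on: "\<forall>i\<in>T. (lsq_hess A *v e)$i = 0"
  shows "e = 0"
proof -
  have "l0 e \<le> 2 * s" by (rule l0_le[of e T]) (use off T in auto)
  hence r: "m*(norm e)^2 \<le> (norm (A *v e))^2" using RIP unfolding ripc_def by blast
  have "(norm (A *v e))^2 = e \<bullet> (lsq_hess A *v e)" by (simp add: hess_dot power2_norm_eq_inner)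
  also have "\<dots> = 0" unfolding inner_vec_def
  proof (rule sum.neutral, intro ballI)
    fix k
    show "e$k \<bullet> (lsq_hess A *v e)$k = 0"
    proof (cases "k \<in> T")
      case True thus ?thesis using on by simp
    next
      case False thus ?thesis using off by simp
    qed
  qed
  finally have "m*(norm e)^2 \<le> 0" using r by simp
  hence "(norm e)^2 \<le> 0" using m by (simp add: mult_le_0_iff)
  thus ?thesis by simp
qed

lemma kth_ge:
  fixes x :: "real^'n"
  assumes T: "card T = s" and s1: "1 \<le> s" and c: "\<forall>k\<in>T. c \<le> \<bar>x$k\<bar>"
  shows "c \<le> kth_abs x s"
proof (rule ccontr)
  assume neg: "\<not> c \<le> kth_abs x s"
  define L where "L = sorted_list_of_multiset (image_mset (\<lambda>i. \<bar>x$i\<bar>) (mset_set (UNIV::'n set)))"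
  define n where "n = CARD('n)"
  have mL: "mset L = image_mset (\<lambda>i. \<bar>x$i\<bar>) (mset_set (UNIV::'n set))" by (simp add: L_def)
  have len: "length L = n" using arg_cong[OF mL, of size] by (simp add: n_def)
  have sL: "sorted L" by (simp add: L_def)
  have sn: "s \<le> n" using T card_mono[of UNIV T] by (simp add: n_def)
  have k: "kth_abs x s = L ! (n - s)"
    using s1 sn len by (simp add: kth_abs_def L_def[symmetric] rev_nth)
  have lt: "L ! (n - s) < c" using neg k by simp
  have "{i. i < length L \<and> c \<le> L ! i} \<subseteq> {n - s + 1..<n}"
  proof
    fix i assume i: "i \<in> {i. i < length L \<and> c \<le> L ! i}"
    have "\<not> i \<le> n - s"
    proof
      assume "i \<le> n - s"
      hence "L ! i \<le> L ! (n - s)" using sorted_nth_mono[OF sL] s1 sn len by simp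
      thus False using i lt by simp
    qed
    thus "i \<in> {n - s + 1..<n}" using i len by auto
  qed
  hence "card {i. i < length L \<and> c \<le> L ! i} \<le> card {n - s + 1..<n}" by (rule card_mono[rotated]) simp
  hence c1: "length (filter (\<lambda>v. c \<le> v) L) \<le> s - 1"
    using s1 sn by (simp add: length_filter_conv_card)
  have "length (filter (\<lambda>v. c \<le> v) L) = size (filter_mset (\<lambda>v. c \<le> v) (mset L))"
    by (metis mset_filter size_mset)
  also have "\<dots> = card {i. c \<le> \<bar>x$i\<bar>}"
    unfolding mL filter_mset_image_mset by (simp add: filter_mset_mset_set)
  finally have "length (filter (\<lambda>v. c \<le> v) L) = card {i. c \<le> \<bar>x$i\<bar>}" .
  moreover have "card T \<le> card {i. c \<le> \<bar>x$i\<bar>}" by (rule card_mono) (use c in auto)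
  ultimately show False using c1 T s1 by simp
qed

lemma tol_dir:
  fixes A :: "real^'n^'m"
  assumes TT: "T \<in> Tset A b s \<eta> x" and s1: "1 \<le> s" and \<eta>: "0 < \<eta>"
    and nd: "newton_dir A b x T 0"
  shows "Tol A b s \<eta> x T = 0"
proof -
  let ?g = "lsq_grad A b x"
  have hT: "\<forall>i\<in>T. ?g$i = 0" and hc: "\<forall>i\<in>-T. x$i = 0"
    using nd by (auto simp: nd_iff)
  have T: "card T = s" using TT by (simp add: Tset_def)
  obtain z where z: "z \<in> proj_s s (x - \<eta> *\<^sub>R ?g)" "supp z \<subseteq> T"
    using TT by (auto simp: Tset_def)
  define y where "y = x - \<eta> *\<^sub>R ?g"
  have Tne: "T \<noteq> {}" using T s1 by auto
  define c where "c = Min ((\<lambda>k. \<bar>x$k\<bar>) ` T)"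
  have "c \<in> (\<lambda>k. \<bar>x$k\<bar>) ` T" unfolding c_def by (rule Min_in) (use Tne in auto)
  then obtain j where j: "j \<in> T" "\<bar>x$j\<bar> = c" by auto
  have cle: "\<forall>k\<in>T. c \<le> \<bar>x$k\<bar>" by (simp add: c_def)
  have ck: "c \<le> kth_abs x s" by (rule kth_ge[OF T s1 cle])
  have F: "Fvec A b x T = 0" using hT hc by (auto simp: Fvec_def vec_eq_iff)
  have gi: "\<eta> * \<bar>?g$i\<bar> \<le> kth_abs x s" if i: "i \<in> -T" for i
  proof -
    define K where "K = insert i (T - {j})"
    have ij: "i \<noteq> j" using i j by auto
    have "card K \<le> Suc (card (T - {j}))" unfolding K_def by (rule card_insert_le_m1[of "Suc (card (T - {j}))", simplified]) (simp_all)
    also have "card (T - {j}) = s - 1" using j T by simp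
    finally have cK: "card K \<le> s" using s1 by simp
    have PL: "(\<Sum>k\<in>UNIV. if k\<in>T then 0 else (y$k)^2) \<le> (\<Sum>k\<in>UNIV. if k\<in>K then 0 else (y$k)^2)"
      using proj_le[OF z(1)[folded y_def] z(2) cK] .
    have "(\<Sum>k\<in>UNIV. if k\<in>K then 0 else (y$k)^2)
        = (\<Sum>k\<in>UNIV. (if k\<in>T then 0 else (y$k)^2) - (if k = i then (y$i)^2 else 0) + (if k = j then (y$j)^2 else 0))"
      by (rule sum.cong) (use i j ij in \<open>auto simp: K_def\<close>)
    also have "\<dots> = (\<Sum>k\<in>UNIV. if k\<in>T then 0 else (y$k)^2) - (y$i)^2 + (y$j)^2"
      by (simp add: sum.distrib sum_subtractf)
    finally have "(y$i)^2 \<le> (y$j)^2" using PL by simp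
    moreover have "y$i = - (\<eta> * ?g$i)" using hc i by (simp add: y_def)
    moreover have "y$j = x$j" using hT j by (simp add: y_def)
    ultimately have "(\<eta> * ?g$i)^2 \<le> (x$j)^2" by simp
    hence "\<bar>\<eta> * ?g$i\<bar> \<le> \<bar>x$j\<bar>" by (simp add: abs_le_square_iff)
    thus ?thesis using j ck \<eta> by (simp add: abs_mult)
  qed
  have M: "Max (insert 0 ((\<lambda>i. max (\<bar>?g $ i\<bar> - kth_abs x s / \<eta>) 0) ` (- T))) = 0"
  proof (rule antisym)
    show "Max (insert 0 ((\<lambda>i. max (\<bar>?g $ i\<bar> - kth_abs x s / \<eta>) 0) ` (- T))) \<le> 0"
    proof (rule Max.boundedI)
      fix v assume "v \<in> insert 0 ((\<lambda>i. max (\<bar>?g $ i\<bar> - kth_abs x s / \<eta>) 0) ` (- T))"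
      then obtain i where "v = 0 \<or> (i \<in> -T \<and> v = max (\<bar>?g $ i\<bar> - kth_abs x s / \<eta>) 0)" by auto
      moreover have "i \<in> -T \<Longrightarrow> \<bar>?g $ i\<bar> \<le> kth_abs x s / \<eta>"
        using gi[of i] \<eta> by (simp add: pos_le_divide_eq mult.commute)
      ultimately show "v \<le> 0" by auto
    qed auto
  qed (rule Max_ge, auto)
  show ?thesis unfolding Tol_def F M by simp
qed

lemma params:
  fixes \<delta> w \<eta> \<sigma> m M \<mu> :: real
  assumes d: "0 < \<delta>" "\<delta> < 1" and mM: "m = 1 - \<delta>" "M = 1 + \<delta>" and mu: "\<mu> = M/m"
    and w: "0<w" "w<1" and sig: "\<sigma> = (1-w)/(2 - w/\<mu>)" and eta: "0<\<eta>" "\<eta> \<le> w/(8*\<mu>^2)"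
  shows "0 < m" "0 < M" "3*m + M \<le> 4" "\<eta> \<le> 1/4" "M*\<eta> \<le> w/8" "0 \<le> 1 - \<sigma>"
    "1/2 \<le> (1-\<sigma>)*(1 - M*\<eta>)"
proof -
  show m0: "0 < m" and M0: "0 < M" using d mM by auto
  show "3*m + M \<le> 4" using d mM by auto
  have "M*m \<le> M*1" using M0 d mM by (intro mult_left_mono) auto
  hence muM: "M \<le> \<mu>" using m0 by (simp add: mu le_divide_eq)
  have M1: "1 \<le> M" using d mM by simp
  have mu1: "1 \<le> \<mu>" using muM M1 by simp
  have "M*1 \<le> \<mu>*\<mu>" using muM mu1 M0 by (intro mult_mono) auto
  hence mu2: "M \<le> \<mu>^2" by (simp add: power2_eq_square)
  have "0 < M*\<mu>^2" using M0 mu1 by simp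
  hence "w/(8*\<mu>^2) \<le> w/(8*M)" using mu2 M0 w by (intro divide_left_mono) auto
  hence "\<eta> \<le> w/(8*M)" using eta by simp
  hence "M*\<eta> \<le> M*(w/(8*M))" using M0 by (intro mult_left_mono) auto
  thus Meta: "M*\<eta> \<le> w/8" using M0 by simp
  have "w/(8*\<mu>^2) \<le> w/(8*1)" using mu2 M1 w by (intro divide_left_mono) auto
  thus "\<eta> \<le> 1/4" using eta w by simp
  define t where "t = w/\<mu>"
  have t0: "0 < t" using w mu1 by (simp add: t_def)
  have tw: "t \<le> w" using w mu1 by (simp add: t_def divide_le_eq)
  have "(1-w)/(2-t) \<le> (1-w)/(2-w)" using tw w t0 by (intro divide_left_mono) auto
  hence "1/(2-w) \<le> 1 - \<sigma>" using w by (simp add: sig t_def[symmetric] field_simps)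
  moreover have "0 \<le> 1/(2-w)" using w by simp
  ultimately show "0 \<le> 1 - \<sigma>" by linarith
  have "1/(2-w) * (1 - w/8) \<le> (1-\<sigma>)*(1 - M*\<eta>)"
    using \<open>1/(2-w) \<le> 1 - \<sigma>\<close> \<open>0 \<le> 1 - \<sigma>\<close> Meta w by (intro mult_mono) auto
  moreover have "1/2 \<le> 1/(2-w) * (1 - w/8)" using w by (simp add: field_simps)
  ultimately show "1/2 \<le> (1-\<sigma>)*(1 - M*\<eta>)" by linarith
qed

lemma one_step:
  fixes A :: "real^'n^'m" and x :: "real^'n"
  assumes RIP: "ripc A s m M" and m: "0 < m" and M: "0 < M" "3*m + M \<le> 4"
    and \<eta>: "0 < \<eta>" "\<eta> \<le> 1/4" and Meta: "M*\<eta> < 1/2"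
    and sig: "0 \<le> 1 - \<sigma>" "1/2 \<le> (1-\<sigma>)*(1 - M*\<eta>)"
    and x: "l0 x \<le> s" and TT: "T \<in> Tset A b s \<eta> x"
  shows "(\<exists>!dN. newton_dir A b x T dN) \<and>
    (\<forall>dN. newton_dir A b x T dN \<longrightarrow>
       newton_accept A b m \<eta> x T dN \<and> armijo A b \<sigma> x T dN 1 \<and>
       step_pt x T dN 1 = x + dN \<and>
       (dN \<noteq> 0 \<longrightarrow> lsq_f A b (x + dN) < lsq_f A b x) \<and>
       (\<forall>i\<in>-T. (x + dN)$i = 0) \<and> (\<forall>i\<in>T. lsq_grad A b (x + dN) $ i = 0))"
proof -
  have T: "card T = s" using TT by (simp add: Tset_def)
  obtain z where z: "\<forall>i\<in>-T. z$i = 0" "\<forall>i\<in>T. lsq_grad A b z $ i = 0"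
    using exists_opt by blast
  have ex: "newton_dir A b x T (z - x)"
    unfolding nd_iff
  proof
    have gd: "lsq_hess A *v (z - x) = lsq_grad A b z - lsq_grad A b x" by (rule grad_diff[symmetric])
    show "\<forall>i\<in>T. (lsq_hess A *v (z - x))$i = - lsq_grad A b x $ i"
      using z(2) gd by simp
    show "\<forall>i\<in>-T. (z - x)$i = - x$i" using z(1) by simp
  qed
  have un: "d1 = d2" if "newton_dir A b x T d1" "newton_dir A b x T d2" for d1 d2
  proof -
    have "d1 - d2 = 0"
    proof (rule uniq[OF RIP m T])
      show "\<forall>i\<in>-T. (d1 - d2)$i = 0" using that by (simp add: nd_iff)
      show "\<forall>i\<in>T. (lsq_hess A *v (d1 - d2))$i = 0"
        using that by (simp add: nd_iff matrix_vector_mult_diff_distrib)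
    qed
    thus ?thesis by simp
  qed
  have props: "newton_accept A b m \<eta> x T d \<and> armijo A b \<sigma> x T d 1 \<and>
       step_pt x T d 1 = x + d \<and>
       (d \<noteq> 0 \<longrightarrow> lsq_f A b (x + d) < lsq_f A b x) \<and>
       (\<forall>i\<in>-T. (x + d)$i = 0) \<and> (\<forall>i\<in>T. lsq_grad A b (x + d) $ i = 0)"
    if nd: "newton_dir A b x T d" for d
  proof -
    have hT: "\<forall>i\<in>T. (lsq_hess A *v d)$i = - lsq_grad A b x $ i" and hc: "\<forall>i\<in>-T. d$i = - x$i"
      using nd by (auto simp: nd_iff)
    have K: "newton_accept A b m \<eta> x T d \<and>
         lsq_grad A b x \<bullet> d \<le> - (1 - M*\<eta>) * (norm (A *v d))^2"
      by (rule key[OF RIP m M x T nd \<eta> TT])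
    define a where "a = (norm (A *v d))^2"
    have a0: "0 \<le> a" by (simp add: a_def)
    have gd: "lsq_grad A b x \<bullet> d \<le> - (1 - M*\<eta>) * a" using K by (simp add: a_def)
    have sp: "step_pt x T d 1 = x + d" using hc by (auto simp: step_pt_def vec_eq_iff)
    have fa: "lsq_f A b (x + d) = lsq_f A b x + lsq_grad A b x \<bullet> d + a/2"
      by (simp add: f_add a_def)
    have "(1-\<sigma>) * (lsq_grad A b x \<bullet> d) \<le> (1-\<sigma>) * (- (1 - M*\<eta>) * a)"
      using gd sig(1) by (rule mult_left_mono)
    also have "\<dots> = - (((1-\<sigma>)*(1 - M*\<eta>)) * a)" by (simp add: algebra_simps)
    also have "\<dots> \<le> - ((1/2) * a)" using sig(2) a0 by (intro le_imp_neg_le mult_right_mono)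
    finally have "(1-\<sigma>) * (lsq_grad A b x \<bullet> d) \<le> - ((1/2) * a)" .
    hence arm: "armijo A b \<sigma> x T d 1" unfolding armijo_def sp fa by (simp add: algebra_simps)
    have dec: "lsq_f A b (x + d) < lsq_f A b x" if "d \<noteq> 0"
    proof -
      have "l0 d \<le> 2 * s"
      proof (rule l0_le[of d "T \<union> {i. x$i \<noteq> 0}"])
        show "{i. d$i \<noteq> 0} \<subseteq> T \<union> {i. x$i \<noteq> 0}" using hc by auto
        have "card (T \<union> {i. x$i \<noteq> 0}) \<le> card T + card {i. x$i \<noteq> 0}" by (rule card_Un_le)
        thus "card (T \<union> {i. x$i \<noteq> 0}) \<le> 2 * s" using T x by (simp add: l0_def)
      qed
      hence "m*(norm d)^2 \<le> a" using RIP unfolding ripc_def a_def by blast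
      moreover have "0 < m*(norm d)^2" using m that by simp
      ultimately have apos: "0 < a" by linarith
      have "(1 - M*\<eta>) * a > (1/2) * a" using apos Meta by (intro mult_strict_right_mono) auto
      hence h2: "a/2 < a - M*\<eta>*a" by (simp add: algebra_simps)
      have g1: "lsq_grad A b x \<bullet> d \<le> M*\<eta>*a - a" using gd by (simp add: algebra_simps)
      show ?thesis unfolding fa using g1 h2 by linarith
    qed
    have off: "\<forall>i\<in>-T. (x + d)$i = 0" using hc by simp
    have on: "\<forall>i\<in>T. lsq_grad A b (x + d) $ i = 0" using hT by (simp add: grad_add)
    show ?thesis using K arm sp dec off on by blast
  qed
  show ?thesis using ex un props by blast
qed

theorem corollary11:
  fixes A :: "real^'n^'m" and b :: "real^'m" and s :: nat
    and w \<eta> \<sigma> \<beta> \<gamma> m2s M2s mu2s :: real and x0 :: "real^'n"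
  assumes s_le: "s \<le> CARD('n)"
    and ric_pos: "0 < ric A (2 * s)" and ric_lt1: "ric A (2 * s) < 1"
    and m2s: "m2s = 1 - ric A (2 * s)" and M2s: "M2s = 1 + ric A (2 * s)"
    and mu2s: "mu2s = M2s / m2s"
    and w: "0 < w" "w < 1"
    and \<beta>: "\<beta> = 1/4"
    and \<sigma>: "\<sigma> = (1 - w) / (2 - w / mu2s)"
    and \<gamma>: "\<gamma> = m2s"
    and \<eta>: "0 < \<eta>" "\<eta> \<le> w / (8 * mu2s^2)"
    and x0: "l0 x0 \<le> s"
  shows
    "(\<forall>x. nhtp_reach A b s \<eta> \<gamma> \<sigma> \<beta> x0 x \<longrightarrow>
        Tset A b s \<eta> x \<noteq> {} \<and>
        (\<forall>T\<in>Tset A b s \<eta> x. Tol A b s \<eta> x T \<noteq> 0 \<longrightarrow>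
           (\<exists>!dN. newton_dir A b x T dN) \<and>
           (\<forall>dN. newton_dir A b x T dN \<longrightarrow>
              newton_accept A b \<gamma> \<eta> x T dN \<and> (\<exists>l::nat. armijo A b \<sigma> x T dN (\<beta> ^ l)))))
     \<and>
     (\<forall>xs Ts ds \<alpha>s xstar.
        xs 0 = x0 \<and>
        (\<forall>k. nhtp_iter A b s \<eta> \<gamma> \<sigma> \<beta> (xs k) (Ts k) (ds k) (\<alpha>s k) (xs (Suc k))) \<and>
        (\<exists>r. strict_mono r \<and> (xs \<circ> r) \<longlonglongrightarrow> xstar)
        \<longrightarrow>
        (xs \<longlonglongrightarrow> xstar \<and> eta_stationary A b s \<eta> xstar) \<and>
        (\<exists>k0. \<forall>k\<ge>k0. newton_dir A b (xs k) (Ts k) (ds k)) \<and>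
        (\<forall>L\<ge>0. \<exists>k0. \<forall>k\<ge>k0.
            \<alpha>s k = 1 \<and>
            norm (xs (Suc k) - xstar) \<le> L / (2 * m2s) * (norm (xs k - xstar))^2 \<and>
            norm (Fvec A b (xs (Suc k)) (Ts (Suc k)))
              \<le> L * sqrt (M2s^2 + 1) / min (m2s^3) m2s * (norm (Fvec A b (xs k) (Ts k)))^2))"
proof -
  have s1: "1 \<le> s"
  proof (rule ccontr)
    assume "\<not> 1 \<le> s"
    hence "s = 0" by simp
    thus False using ric_pos ric_zero[of A] by simp
  qed
  have RIP: "ripc A s m2s M2s"
    unfolding ripc_def m2s M2s using ric_rip[of _ "2 * s" A] by blast
  note P = params[OF ric_pos ric_lt1 m2s M2s mu2s w \<sigma> \<eta>]
  have Meta: "M2s*\<eta> < 1/2" using P(5) w by simp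
  note OS = one_step[OF RIP P(1) P(2) P(3) \<eta>(1) P(4) Meta P(6) P(7)]
  have sparse: "l0 x \<le> s" if "nhtp_reach A b s \<eta> \<gamma> \<sigma> \<beta> x0 x" for x
    using that
  proof (induction rule: nhtp_reach.induct)
    case start thus ?case by (rule x0)
  next
    case (step x T d \<alpha> x')
    hence "T \<in> Tset A b s \<eta> x" "x' = step_pt x T d \<alpha>" by (auto simp: nhtp_iter_def)
    thus ?case by (intro l0_le[of x' T]) (auto simp: step_pt_def Tset_def)
  qed
  have part1: "\<forall>x. nhtp_reach A b s \<eta> \<gamma> \<sigma> \<beta> x0 x \<longrightarrow>
        Tset A b s \<eta> x \<noteq> {} \<and>
        (\<forall>T\<in>Tset A b s \<eta> x. Tol A b s \<eta> x T \<noteq> 0 \<longrightarrow>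
           (\<exists>!dN. newton_dir A b x T dN) \<and>
           (\<forall>dN. newton_dir A b x T dN \<longrightarrow>
              newton_accept A b \<gamma> \<eta> x T dN \<and> (\<exists>l::nat. armijo A b \<sigma> x T dN (\<beta> ^ l))))"
  proof (intro allI impI)
    fix x assume r: "nhtp_reach A b s \<eta> \<gamma> \<sigma> \<beta> x0 x"
    have ne: "Tset A b s \<eta> x \<noteq> {}" by (rule Tset_nonempty[OF s_le])
    have rest: "\<forall>T\<in>Tset A b s \<eta> x. Tol A b s \<eta> x T \<noteq> 0 \<longrightarrow>
           (\<exists>!dN. newton_dir A b x T dN) \<and>
           (\<forall>dN. newton_dir A b x T dN \<longrightarrow>
              newton_accept A b \<gamma> \<eta> x T dN \<and> (\<exists>l::nat. armijo A b \<sigma> x T dN (\<beta> ^ l)))"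
    proof (intro ballI impI)
      fix T assume TT: "T \<in> Tset A b s \<eta> x"
      note O = OS[OF sparse[OF r] TT]
      have e1: "(\<exists>!dN. newton_dir A b x T dN)" using O by blast
      have e2: "\<forall>dN. newton_dir A b x T dN \<longrightarrow>
              newton_accept A b \<gamma> \<eta> x T dN \<and> (\<exists>l::nat. armijo A b \<sigma> x T dN (\<beta> ^ l))"
      proof (intro allI impI)
        fix dN assume "newton_dir A b x T dN"
        hence "newton_accept A b m2s \<eta> x T dN \<and> armijo A b \<sigma> x T dN 1" using O by blast
        moreover have "armijo A b \<sigma> x T dN 1 \<Longrightarrow> \<exists>l::nat. armijo A b \<sigma> x T dN (\<beta> ^ l)"
          by (rule exI[of _ 0]) simp
        ultimately show "newton_accept A b \<gamma> \<eta> x T dN \<and> (\<exists>l::nat. armijo A b \<sigma> x T dN (\<beta> ^ l))"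
          using \<gamma> by blast
      qed
      show "(\<exists>!dN. newton_dir A b x T dN) \<and>
           (\<forall>dN. newton_dir A b x T dN \<longrightarrow>
              newton_accept A b \<gamma> \<eta> x T dN \<and> (\<exists>l::nat. armijo A b \<sigma> x T dN (\<beta> ^ l)))"
        using e1 e2 by blast
    qed
    show "Tset A b s \<eta> x \<noteq> {} \<and>
        (\<forall>T\<in>Tset A b s \<eta> x. Tol A b s \<eta> x T \<noteq> 0 \<longrightarrow>
           (\<exists>!dN. newton_dir A b x T dN) \<and>
           (\<forall>dN. newton_dir A b x T dN \<longrightarrow>
              newton_accept A b \<gamma> \<eta> x T dN \<and> (\<exists>l::nat. armijo A b \<sigma> x T dN (\<beta> ^ l))))"
      using ne rest by blast
  qed
  have part2: False
    if H: "xs 0 = x0" "\<forall>k. nhtp_iter A b s \<eta> \<gamma> \<sigma> \<beta> (xs k) (Ts k) (ds k) (\<alpha>s k) (xs (Suc k))"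
    for xs Ts ds \<alpha>s
  proof -
    have it: "Ts k \<in> Tset A b s \<eta> (xs k) \<and> Tol A b s \<eta> (xs k) (Ts k) \<noteq> 0 \<and>
       nhtp_dir A b \<gamma> \<eta> (xs k) (Ts k) (ds k) \<and>
       \<alpha>s k = \<beta> ^ (LEAST l::nat. armijo A b \<sigma> (xs k) (Ts k) (ds k) (\<beta> ^ l)) \<and>
       xs (Suc k) = step_pt (xs k) (Ts k) (ds k) (\<alpha>s k)" for k
      using H(2) by (simp add: nhtp_iter_def)
    have sp: "l0 (xs k) \<le> s" for k
    proof (induction k)
      case 0 thus ?case using H(1) x0 by simp
    next
      case (Suc k)
      have "Ts k \<in> Tset A b s \<eta> (xs k)" "xs (Suc k) = step_pt (xs k) (Ts k) (ds k) (\<alpha>s k)"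
        using it[of k] by auto
      thus ?case by (intro l0_le[of _ "Ts k"]) (auto simp: step_pt_def Tset_def)
    qed
    have stepk: "lsq_f A b (xs (Suc k)) < lsq_f A b (xs k) \<and>
       (\<forall>i\<in>-Ts k. xs (Suc k) $ i = 0) \<and> (\<forall>i\<in>Ts k. lsq_grad A b (xs (Suc k)) $ i = 0)" for k
    proof -
      note I = it[of k]
      note O = OS[OF sp[of k], of "Ts k"]
      have O': "(\<exists>!dN. newton_dir A b (xs k) (Ts k) dN) \<and>
        (\<forall>dN. newton_dir A b (xs k) (Ts k) dN \<longrightarrow>
         newton_accept A b m2s \<eta> (xs k) (Ts k) dN \<and> armijo A b \<sigma> (xs k) (Ts k) dN 1 \<and>
         step_pt (xs k) (Ts k) dN 1 = xs k + dN \<and>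
         (dN \<noteq> 0 \<longrightarrow> lsq_f A b (xs k + dN) < lsq_f A b (xs k)) \<and>
         (\<forall>i\<in>-Ts k. (xs k + dN)$i = 0) \<and> (\<forall>i\<in>Ts k. lsq_grad A b (xs k + dN) $ i = 0))"
        using O I by blast
      then obtain dN where dN: "newton_dir A b (xs k) (Ts k) dN" by blast
      hence "newton_accept A b \<gamma> \<eta> (xs k) (Ts k) dN" using O' \<gamma> by blast
      hence nd: "newton_dir A b (xs k) (Ts k) (ds k)"
        using I dN unfolding nhtp_dir_def by blast
      have props: "armijo A b \<sigma> (xs k) (Ts k) (ds k) 1 \<and>
         step_pt (xs k) (Ts k) (ds k) 1 = xs k + ds k \<and>
         (ds k \<noteq> 0 \<longrightarrow> lsq_f A b (xs k + ds k) < lsq_f A b (xs k)) \<and>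
         (\<forall>i\<in>-Ts k. (xs k + ds k)$i = 0) \<and> (\<forall>i\<in>Ts k. lsq_grad A b (xs k + ds k) $ i = 0)"
        using O' nd by blast
      have "(LEAST l::nat. armijo A b \<sigma> (xs k) (Ts k) (ds k) (\<beta> ^ l)) = 0"
        by (rule Least_eq_0) (use props in simp)
      hence a1: "\<alpha>s k = 1" using I by simp
      hence xe: "xs (Suc k) = xs k + ds k" using I props by simp
      have "ds k \<noteq> 0"
      proof
        assume "ds k = 0"
        hence "Tol A b s \<eta> (xs k) (Ts k) = 0"
          using tol_dir[of "Ts k" A b s \<eta> "xs k"] I nd s1 \<eta>(1) by simp
        thus False using I by simp
      qed
      thus ?thesis using props xe by simp
    qed
    define Z where "Z T = (SOME z. (\<forall>i\<in>-T. z$i = 0) \<and> (\<forall>i\<in>T. lsq_grad A b z $ i = 0))" for T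
    have Zeq: "xs (Suc k) = Z (Ts k)" for k
    proof -
      let ?P = "\<lambda>z. (\<forall>i\<in>-Ts k. z$i = 0) \<and> (\<forall>i\<in>Ts k. lsq_grad A b z $ i = 0)"
      have p1: "?P (xs (Suc k))" using stepk[of k] by blast
      hence p2: "?P (Z (Ts k))" unfolding Z_def by (rule someI)
      have cT: "card (Ts k) = s" using it[of k] by (simp add: Tset_def)
      have "xs (Suc k) - Z (Ts k) = 0"
      proof (rule uniq[OF RIP P(1) cT])
        show "\<forall>i\<in>-Ts k. (xs (Suc k) - Z (Ts k))$i = 0" using p1 p2 by simp
        have "lsq_hess A *v (xs (Suc k) - Z (Ts k)) = lsq_grad A b (xs (Suc k)) - lsq_grad A b (Z (Ts k))"
          by (rule grad_diff[symmetric])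
        thus "\<forall>i\<in>Ts k. (lsq_hess A *v (xs (Suc k) - Z (Ts k)))$i = 0" using p1 p2 by simp
      qed
      thus ?thesis by simp
    qed
    have fin: "finite (range (\<lambda>k. xs (Suc k)))"
    proof (rule finite_subset)
      show "range (\<lambda>k. xs (Suc k)) \<subseteq> range Z" using Zeq by auto
    qed simp
    have dec: "- lsq_f A b (xs (Suc k1)) < - lsq_f A b (xs (Suc k2))" if "k1 < k2" for k1 k2
      using lift_Suc_mono_less[of "\<lambda>k. - lsq_f A b (xs (Suc k))", OF _ that] stepk by simp
    have "inj (\<lambda>k. xs (Suc k))"
    proof (rule injI)
      fix k1 k2 assume eq: "xs (Suc k1) = xs (Suc k2)"
      show "k1 = k2"
      proof (rule ccontr)
        assume "k1 \<noteq> k2"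
        hence "k1 < k2 \<or> k2 < k1" by arith
        thus False using dec[of k1 k2] dec[of k2 k1] eq by auto
      qed
    qed
    hence "finite (UNIV :: nat set)" using finite_imageD[OF fin] by blast
    thus False by simp
  qed
  show ?thesis
    using part1 part2 by blast
qed

end
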